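(* Any sequence $\{f_n\}\subset\mathcal{B}^-_d$ has a subsequence converging algebraically to some $f\in\overline{\mathrm{Rat}_d^-}$ such that $e^{i\theta}\varphi_f\in\mathcal{B}^-_k$ for some $\theta\in\mathbb{R}$ and some $1\le k\le d$. More generally, for $K\ge0$, any sequence of degree $d$ proper anti-holomorphic maps $f_n:\mathbb{D}\to\mathbb{D}$ with $d_{\mathbb{D}}(0,f_n(0))\le K$ has a subsequence converging algebraically to some $f\in\overline{\mathrm{Rat}_d^-}$ of degree $\ge1$.
   Context: $\mathcal{B}^-_k=\{\bar z\prod_{i=1}^{k-1}\frac{\bar z-a_i}{1-\overline{a_iz}}:|a_i|<1\}$; $d_{\mathbb{D}}$ is the hyperbolic metric on $\mathbb{D}$; proper anti-holomorphic self-maps of $\mathbb{D}$ are viewed as anti-rational maps via Schwarz reflection. Writing an anti-rational map of degree $d$ as $(P:Q)$ with $P,Q$ homogeneous anti-polynomials of degree $d$ without common factor identifies $\mathrm{Rat}_d^-$ with $\mathbb{P}^{2d+1}\setminus V(\mathrm{Res})$; its closure $\overline{\mathrm{Rat}_d^-}=\mathbb{P}^{2d+1}$ is the algebraic compactification. For $f=(P:Q)=(Hp:Hq)\in\overline{\mathrm{Rat}_d^-}$ with $H=\gcd(P,Q)$, set $\varphi_f=(p:q)$; the degree of $f$ means the degree of $\varphi_f$. Algebraic convergence means convergence in $\mathbb{P}^{2d+1}$. *)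

theory Defs
  imports "HOL-Complex_Analysis.Complex_Analysis" "HOL-Computational_Algebra.Polynomial_Factorial" "HOL-Computational_Algebra.Field_as_Ring"
begin

text \<open>A point of P^{2d+1} is represented by a pair (p,q) of one-variable complex
polynomials of degree at most d, not both zero; the homogeneous anti-polynomials are
P(X,Y) = Y^d p(X/Y), Q(X,Y) = Y^d q(X/Y) in the conjugated variables, so the 2d+2
homogeneous coordinates are exactly the coefficients of p and q up to degree d.
The anti-rational map is z \<mapsto> p(cnj z)/q(cnj z).\<close>

definition proj_pt :: "nat \<Rightarrow> complex poly \<times> complex poly \<Rightarrow> bool" where
  "proj_pt d v \<longleftrightarrow> degree (fst v) \<le> d \<and> degree (snd v) \<le> d \<and> v \<noteq> (0, 0)"

text \<open>Algebraic convergence: convergence in P^{2d+1} (quotient topology of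
C^{2d+2} minus 0), i.e. suitable rescalings of the coordinate vectors converge.\<close>
definition alg_conv :: "nat \<Rightarrow> (nat \<Rightarrow> complex poly \<times> complex poly) \<Rightarrow> complex poly \<times> complex poly \<Rightarrow> bool" where
  "alg_conv d s v \<longleftrightarrow> (\<forall>n. proj_pt d (s n)) \<and> proj_pt d v \<and>
     (\<exists>c::nat \<Rightarrow> complex. (\<forall>n. c n \<noteq> 0) \<and>
        (\<forall>i\<le>d. (\<lambda>n. c n * coeff (fst (s n)) i) \<longlonglongrightarrow> coeff (fst v) i \<and>
                (\<lambda>n. c n * coeff (snd (s n)) i) \<longlonglongrightarrow> coeff (snd v) i))"

definition phi :: "complex poly \<times> complex poly \<Rightarrow> complex poly \<times> complex poly" where
  "phi v = (fst v div gcd (fst v) (snd v), snd v div gcd (fst v) (snd v))"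

definition map_degree :: "complex poly \<times> complex poly \<Rightarrow> nat" where
  "map_degree v = max (degree (fst (phi v))) (degree (snd (phi v)))"

text \<open>The pair of (dehomogenised) anti-polynomials of
 z \<mapsto> cnj z * prod_i (cnj z - a_i)/(1 - cnj (a_i z)), written in w = cnj z.\<close>
definition blaschke_pair :: "complex list \<Rightarrow> complex poly \<times> complex poly" where
  "blaschke_pair as = ([:0, 1:] * (\<Prod>a\<leftarrow>as. [:- a, 1:]), (\<Prod>a\<leftarrow>as. [:1, - cnj a:]))"

definition in_Bminus :: "nat \<Rightarrow> complex poly \<times> complex poly \<Rightarrow> bool" where
  "in_Bminus k v \<longleftrightarrow> (\<exists>as. length as = k - 1 \<and> (\<forall>a\<in>set as. norm a < 1) \<and>
      (\<exists>c. c \<noteq> 0 \<and> fst v = smult c (fst (blaschke_pair as)) \<and> snd v = smult c (snd (blaschke_pair as))))"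

definition hyp_dist :: "complex \<Rightarrow> complex \<Rightarrow> real" where
  "hyp_dist z w = (let r = norm (z - w) / norm (1 - cnj z * w) in ln ((1 + r) / (1 - r)))"

definition proper_antihol_deg :: "nat \<Rightarrow> (complex \<Rightarrow> complex) \<Rightarrow> bool" where
  "proper_antihol_deg d f \<longleftrightarrow>
     (\<lambda>z. cnj (f z)) holomorphic_on ball 0 1 \<and> f ` ball 0 1 \<subseteq> ball 0 1 \<and>
     (\<forall>C. compact C \<and> C \<subseteq> ball 0 1 \<longrightarrow> compact {z \<in> ball 0 1. f z \<in> C}) \<and>
     (\<forall>w\<in>ball 0 1. finite {z \<in> ball 0 1. f z = w} \<and>
        (\<Sum>z\<in>{z \<in> ball 0 1. f z = w}. zorder (\<lambda>x. cnj (f x) - cnj w) z) = int d)"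

text \<open>(p,q) is the point of Rat_d^- obtained from f by Schwarz reflection: a reduced
 degree-d anti-rational map agreeing with f on the disc.\<close>
definition anti_rat_rep :: "nat \<Rightarrow> (complex \<Rightarrow> complex) \<Rightarrow> complex poly \<times> complex poly \<Rightarrow> bool" where
  "anti_rat_rep d f v \<longleftrightarrow> coprime (fst v) (snd v) \<and>
     max (degree (fst v)) (degree (snd v)) = d \<and>
     (\<forall>z\<in>ball 0 1. poly (snd v) (cnj z) \<noteq> 0 \<and> f z = poly (fst v) (cnj z) / poly (snd v) (cnj z))"

end

theory Submission
  imports Defs "HOL-Computational_Algebra.Fundamental_Theorem_Algebra"
begin


definition Pl :: "complex list \<Rightarrow> complex poly" where
  "Pl L = (\<Prod>a\<leftarrow>L. [:- a, 1:])"
definition Ql :: "complex list \<Rightarrow> complex poly" where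
  "Ql L = (\<Prod>a\<leftarrow>L. [:1, - cnj a:])"

lemma Pl_Nil[simp]: "Pl [] = 1" by (simp add: Pl_def)
lemma Ql_Nil[simp]: "Ql [] = 1" by (simp add: Ql_def)
lemma Pl_Cons: "Pl (a # L) = [:- a, 1:] * Pl L" by (simp add: Pl_def)
lemma Ql_Cons: "Ql (a # L) = [:1, - cnj a:] * Ql L" by (simp add: Ql_def)
lemma poly_Pl: "poly (Pl L) x = (\<Prod>a\<leftarrow>L. x - a)"
  by (induction L) (auto simp: Pl_Cons algebra_simps)
lemma poly_Ql: "poly (Ql L) x = (\<Prod>a\<leftarrow>L. 1 - cnj a * x)"
  by (induction L) (auto simp: Ql_Cons algebra_simps)
lemma lead_Pl: "lead_coeff (Pl L) = 1"
  by (induction L) (simp_all only: Pl_Cons lead_coeff_mult, simp_all)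
lemma Pl_nz: "Pl L \<noteq> 0"
  using lead_Pl[of L] by auto
lemma degree_Pl: "degree (Pl L) = length L"
proof (induction L)
  case (Cons a L)
  have "degree ([:- a, 1:] * Pl L) = degree [:- a, 1:] + degree (Pl L)"
    by (rule degree_mult_eq) (auto simp: Pl_nz)
  then show ?case using Cons by (simp add: Pl_Cons)
qed simp
lemma degree_Ql: "degree (Ql L) \<le> length L"
proof (induction L)
  case Nil then show ?case by (simp add: Ql_def)
next
  case (Cons a L)
  have "degree (Ql (a # L)) \<le> degree [:1, - cnj a:] + degree (Ql L)"
    unfolding Ql_Cons by (rule degree_mult_le)
  also have "\<dots> \<le> 1 + length L" using Cons by simp
  finally show ?case by simp
qed

lemma coprime_no_common_root:
  fixes p q :: "complex poly"
  assumes "p \<noteq> 0" and "\<And>x. poly p x = 0 \<Longrightarrow> poly q x \<noteq> 0"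
  shows "coprime p q"
proof (rule ccontr)
  assume nc: "\<not> coprime p q"
  let ?g = "gcd p q"
  have g0: "?g \<noteq> 0" using assms(1) by simp
  have "\<not> is_unit ?g" using nc by (simp add: coprime_iff_gcd_eq_1 is_unit_gcd)
  then have "degree ?g \<noteq> 0" using g0 is_unit_iff_degree by blast
  then obtain x where x: "poly ?g x = 0"
    using fundamental_theorem_of_algebra_alt[of ?g]
    by (metis constant_degree degree_pCons_0 fundamental_theorem_of_algebra pCons_0_0 poly_0_coeff_0 poly_pCons)
  have "poly p x = 0" using x by (metis gcd_dvd1 poly_eq_0_iff_dvd dvd_trans)
  moreover have "poly q x = 0" using x by (metis gcd_dvd2 poly_eq_0_iff_dvd dvd_trans)
  ultimately show False using assms(2) by blast
qed

lemma prod_list_filter_split: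
  fixes f :: "'a \<Rightarrow> 'b::comm_monoid_mult"
  shows "(\<Prod>x\<leftarrow>xs. f x) = (\<Prod>x\<leftarrow>filter P xs. f x) * (\<Prod>x\<leftarrow>filter (\<lambda>x. \<not> P x) xs. f x)"
  by (induction xs) (auto simp: mult_ac)

lemma Pl_split: "Pl M = Pl (filter P M) * Pl (filter (\<lambda>x. \<not> P x) M)"
  unfolding Pl_def by (rule prod_list_filter_split)
lemma Ql_split: "Ql M = Ql (filter P M) * Ql (filter (\<lambda>x. \<not> P x) M)"
  unfolding Ql_def by (rule prod_list_filter_split)

lemma Ql_boundary:
  assumes "\<forall>b\<in>set L. norm b = 1"
  shows "Ql L = smult (\<Prod>b\<leftarrow>L. - cnj b) (Pl L)"
  using assms
proof (induction L)
  case (Cons b L)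
  have "cnj b * b = 1" using Cons.prems complex_norm_square[of b]
    by (simp add: mult.commute)
  then have "[:1, - cnj b:] = smult (- cnj b) [:- b, 1:]" by simp
  have "Ql (b # L) = smult (- cnj b) [:- b, 1:] * smult (\<Prod>b\<leftarrow>L. - cnj b) (Pl L)"
    unfolding Ql_Cons using Cons by (simp only: \<open>[:1, - cnj b:] = _\<close>) simp
  also have "\<dots> = smult (- cnj b * (\<Prod>b\<leftarrow>L. - cnj b)) ([:- b, 1:] * Pl L)"
    by (simp only: mult_smult_left mult_smult_right smult_smult mult.commute)
  finally show ?case by (simp add: Pl_Cons)
qed simp

lemma norm_prod_boundary:
  assumes "\<forall>b\<in>set L. norm b = 1"
  shows "norm (\<Prod>b\<leftarrow>L. - cnj b) = 1"
  using assms by (induction L) (auto simp: norm_mult)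

lemma normalize_monic:
  fixes E :: "complex poly"
  assumes "lead_coeff E = 1"
  shows "normalize E = E"
proof -
  have "unit_factor E = 1" using assms by (simp add: unit_factor_poly_def one_pCons)
  then show ?thesis using normalize_mult_unit_factor[of E] by simp
qed

lemma norm_lt1_cnj_prod: "norm (a::complex) < 1 \<Longrightarrow> norm b \<le> 1 \<Longrightarrow> 1 - cnj a * b \<noteq> 0"
proof
  assume "norm a < 1" "norm b \<le> 1" "1 - cnj a * b = 0"
  then have "norm (cnj a * b) = 1" by (metis eq_iff_diff_eq_0 norm_one)
  moreover have "norm (cnj a * b) < 1" using \<open>norm a < 1\<close> \<open>norm b \<le> 1\<close>
    using mult_left_le[of "norm b" "norm a"] by (simp add: norm_mult)
  ultimately show False by simp
qed

lemma poly_Ql_nz: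
  assumes "\<forall>a\<in>set L. norm a < 1" "norm x \<le> 1"
  shows "poly (Ql L) x \<noteq> 0"
  using assms
proof (induction L)
  case (Cons a L)
  have "1 - cnj a * x \<noteq> 0" using Cons.prems by (intro norm_lt1_cnj_prod) auto
  moreover have "poly (Ql L) x \<noteq> 0" using Cons by auto
  ultimately show ?case unfolding Ql_Cons poly_mult by (simp add: mult.commute)
qed simp

lemma phi_blaschke:
  assumes "\<forall>a\<in>set M. norm a \<le> 1"
  defines "I \<equiv> filter (\<lambda>a. norm a < 1) M" and "Bd \<equiv> filter (\<lambda>a. \<not> norm a < 1) M"
  shows "phi (blaschke_pair M) = ([:0, 1:] * Pl I, smult (\<Prod>b\<leftarrow>Bd. - cnj b) (Ql I))"
proof -
  let ?g = "\<Prod>b\<leftarrow>Bd. - cnj b"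
  let ?E = "Pl Bd"
  have bd: "\<forall>b\<in>set Bd. norm b = 1" using assms(1) unfolding Bd_def by force
  have Iin: "\<forall>a\<in>set I. norm a < 1" unfolding I_def by auto
  have g0: "?g \<noteq> 0" using norm_prod_boundary[OF bd] by auto
  have f: "fst (blaschke_pair M) = ([:0, 1:] * Pl I) * ?E"
    unfolding blaschke_pair_def Pl_def[symmetric] I_def Bd_def
    using Pl_split[of M "\<lambda>a. norm a < 1"] by (simp add: mult_ac)
  have s: "snd (blaschke_pair M) = smult ?g (Ql I) * ?E"
    unfolding blaschke_pair_def Ql_def[symmetric]
    using Ql_split[of M "\<lambda>a. norm a < 1"] Ql_boundary[OF bd]
    unfolding I_def[symmetric] Bd_def[symmetric] by (simp add: mult_ac)
  have cop: "coprime ([:0, 1:] * Pl I) (smult ?g (Ql I))"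
  proof (rule coprime_no_common_root)
    show "[:0, 1:] * Pl I \<noteq> 0" using Pl_nz by simp
  next
    fix x assume "poly ([:0, 1:] * Pl I) x = 0"
    then have "x = 0 \<or> (\<exists>a\<in>set I. x = a)" by (auto simp: poly_Pl prod_list_zero_iff)
    then have "norm x \<le> 1" using Iin by auto
    then show "poly (smult ?g (Ql I)) x \<noteq> 0" using g0 poly_Ql_nz[OF Iin] by simp
  qed
  have gcd: "gcd (fst (blaschke_pair M)) (snd (blaschke_pair M)) = ?E"
  proof -
    have "gcd (fst (blaschke_pair M)) (snd (blaschke_pair M)) =
          normalize (gcd (smult ?g (Ql I)) ([:0, 1:] * Pl I) * ?E)"
      unfolding f s by (rule gcd_mult_right)
    also have "gcd (smult ?g (Ql I)) ([:0, 1:] * Pl I) = 1"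
      using cop by (simp add: coprime_commute coprime_iff_gcd_eq_1)
    finally show ?thesis using normalize_monic[OF lead_Pl] by simp
  qed
  have "fst (blaschke_pair M) div ?E = [:0, 1:] * Pl I"
    unfolding f by (rule nonzero_mult_div_cancel_right[OF Pl_nz])
  moreover have "snd (blaschke_pair M) div ?E = smult ?g (Ql I)"
    unfolding s by (rule nonzero_mult_div_cancel_right[OF Pl_nz])
  ultimately show ?thesis unfolding phi_def gcd by simp
qed



definition cconv :: "(nat \<Rightarrow> complex poly) \<Rightarrow> complex poly \<Rightarrow> bool" where
  "cconv p p0 \<longleftrightarrow> (\<forall>j. (\<lambda>n. coeff (p n) j) \<longlonglongrightarrow> coeff p0 j)"

lemma cconv_mult: "cconv p p0 \<Longrightarrow> cconv q q0 \<Longrightarrow> cconv (\<lambda>n. p n * q n) (p0 * q0)"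
  unfolding cconv_def coeff_mult by (auto intro!: tendsto_sum tendsto_mult)

lemma cconv_const: "cconv (\<lambda>n. p) p"
  unfolding cconv_def by simp

lemma cconv_lin: "a \<longlonglongrightarrow> a0 \<Longrightarrow> b \<longlonglongrightarrow> b0 \<Longrightarrow> cconv (\<lambda>n. [:a n, b n:]) [:a0, b0:]"
  unfolding cconv_def
proof
  fix j assume "a \<longlonglongrightarrow> a0" "b \<longlonglongrightarrow> b0"
  then show "(\<lambda>n. coeff [:a n, b n:] j) \<longlonglongrightarrow> coeff [:a0, b0:] j"
    by (cases j; cases "j - 1") (auto simp: coeff_pCons)
qed

lemma cconv_smult: "c \<longlonglongrightarrow> c0 \<Longrightarrow> cconv p p0 \<Longrightarrow> cconv (\<lambda>n. smult (c n) (p n)) (smult c0 p0)"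
  unfolding cconv_def by (auto intro!: tendsto_mult)

definition lconv :: "(nat \<Rightarrow> complex list) \<Rightarrow> complex list \<Rightarrow> bool" where
  "lconv L M \<longleftrightarrow> (\<forall>n. length (L n) = length M) \<and> (\<forall>i<length M. (\<lambda>n. L n ! i) \<longlonglongrightarrow> M ! i)"

lemma lconv_Cons:
  assumes "lconv L (m # M)"
  shows "(\<lambda>n. hd (L n)) \<longlonglongrightarrow> m" "lconv (\<lambda>n. tl (L n)) M" "\<And>n. L n = hd (L n) # tl (L n)"
proof -
  have len: "\<And>n. length (L n) = Suc (length M)" using assms by (simp add: lconv_def)
  show eq: "\<And>n. L n = hd (L n) # tl (L n)" using len by (metis list.collapse list.size(3) nat.distinct(1))
  have "(\<lambda>n. L n ! 0) \<longlonglongrightarrow> (m # M) ! 0" using assms unfolding lconv_def by blast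
  moreover have "\<And>n. L n ! 0 = hd (L n)" by (subst eq) simp
  ultimately show "(\<lambda>n. hd (L n)) \<longlonglongrightarrow> m" by simp
  show "lconv (\<lambda>n. tl (L n)) M" unfolding lconv_def
  proof safe
    show "length (tl (L n)) = length M" for n using len by simp
    fix i assume "i < length M"
    then have "Suc i < length (m # M)" by simp
    then have "(\<lambda>n. L n ! Suc i) \<longlonglongrightarrow> (m # M) ! Suc i" using assms unfolding lconv_def by blast
    moreover have "\<And>n. tl (L n) ! i = L n ! Suc i" by (subst (2) eq) simp
    ultimately show "(\<lambda>n. tl (L n) ! i) \<longlonglongrightarrow> M ! i" by simp
  qed
qed

lemma cconv_Pl: "lconv L M \<Longrightarrow> cconv (\<lambda>n. Pl (L n)) (Pl M)"
proof (induction M arbitrary: L)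
  case Nil
  then have "\<And>n. L n = []" by (simp add: lconv_def)
  then show ?case by (simp add: cconv_const)
next
  case (Cons m M)
  note c = lconv_Cons[OF Cons.prems]
  have "cconv (\<lambda>n. [:- hd (L n), 1:] * Pl (tl (L n))) ([:- m, 1:] * Pl M)"
    by (intro cconv_mult cconv_lin Cons.IH c tendsto_minus tendsto_const)
  then show ?case by (subst c(3)) (simp add: Pl_Cons)
qed

lemma cconv_Ql: "lconv L M \<Longrightarrow> cconv (\<lambda>n. Ql (L n)) (Ql M)"
proof (induction M arbitrary: L)
  case Nil
  then have "\<And>n. L n = []" by (simp add: lconv_def)
  then show ?case by (simp add: cconv_const)
next
  case (Cons m M)
  note c = lconv_Cons[OF Cons.prems]
  have "cconv (\<lambda>n. [:1, - cnj (hd (L n)):] * Ql (tl (L n))) ([:1, - cnj m:] * Ql M)"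
    by (intro cconv_mult cconv_lin Cons.IH c tendsto_minus tendsto_const tendsto_cnj)
  then show ?case by (subst c(3)) (simp add: Ql_Cons)
qed

lemma extract_sub:
  fixes L :: "nat \<Rightarrow> complex list"
  assumes "\<And>n. length (L n) = m" "\<And>n. \<forall>a\<in>set (L n). norm a \<le> 1"
  shows "\<exists>r M. strict_mono r \<and> lconv (L \<circ> r) M \<and> (\<forall>a\<in>set M. norm a \<le> 1)"
  using assms
proof (induction m arbitrary: L)
  case 0
  have "lconv L []" using 0 by (auto simp: lconv_def)
  moreover have "strict_mono (\<lambda>x::nat. x)" by (simp add: strict_mono_def)
  ultimately show ?case by (intro exI[where x=id] exI[where x="[]"]) simp
next
  case (Suc m)
  have ne: "L n \<noteq> []" for n using Suc.prems(1)[of n] by auto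
  have hdn: "\<And>n. L n ! 0 = hd (L n)" using ne by (simp add: hd_conv_nth)
  have tln: "L n ! Suc i = tl (L n) ! i" for n i using ne[of n] by (cases "L n") auto
  have "\<forall>n. hd (L n) \<in> cball 0 1"
  proof
    fix n
    have "hd (L n) \<in> set (L n)" using ne by simp
    then show "hd (L n) \<in> cball 0 1" using Suc.prems(2)[of n] by simp
  qed
  then obtain l r1 where l: "l \<in> cball 0 1" "strict_mono r1" "((\<lambda>n. hd (L n)) \<circ> r1) \<longlonglongrightarrow> l"
    using seq_compactE[OF compact_imp_seq_compact[OF compact_cball[of 0 1]]] by metis
  have "\<exists>r M. strict_mono r \<and> lconv ((\<lambda>n. tl (L (r1 n))) \<circ> r) M \<and> (\<forall>a\<in>set M. norm a \<le> 1)"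
  proof (rule Suc.IH)
    fix n
    show "length (tl (L (r1 n))) = m" using Suc.prems(1) by simp
    have "set (tl (L (r1 n))) \<subseteq> set (L (r1 n))" using ne[of "r1 n"] by (simp add: list.set_sel(2) subsetI)
    then show "\<forall>a\<in>set (tl (L (r1 n))). norm a \<le> 1" using Suc.prems(2)[of "r1 n"] by blast
  qed
  then obtain r2 M where r2: "strict_mono r2" "lconv ((\<lambda>n. tl (L (r1 n))) \<circ> r2) M" "\<forall>a\<in>set M. norm a \<le> 1"
    by blast
  have hd: "(\<lambda>n. hd (L (r1 (r2 n)))) \<longlonglongrightarrow> l"
    using LIMSEQ_subseq_LIMSEQ[OF l(3) r2(1)] by (simp add: o_def)
  have sm: "strict_mono (r1 \<circ> r2)" using l(2) r2(1) by (rule strict_mono_o)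
  have bd: "\<forall>a\<in>set (l # M). norm a \<le> 1" using l(1) r2(3) by auto
  have lc: "lconv (L \<circ> (r1 \<circ> r2)) (l # M)" unfolding lconv_def
  proof (intro conjI allI impI)
    show "length ((L \<circ> (r1 \<circ> r2)) n) = length (l # M)" for n
      using Suc.prems(1) r2(2) by (simp add: lconv_def)
    fix i assume i: "i < length (l # M)"
    show "(\<lambda>n. (L \<circ> (r1 \<circ> r2)) n ! i) \<longlonglongrightarrow> (l # M) ! i"
    proof (cases i)
      case 0 then show ?thesis using hd by (simp add: hdn)
    next
      case (Suc j)
      then have "j < length M" using i by simp
      then have "(\<lambda>n. tl (L (r1 (r2 n))) ! j) \<longlonglongrightarrow> M ! j" using r2(2) unfolding lconv_def by auto
      then show ?thesis using Suc by (simp add: tln)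
    qed
  qed
  show ?case using sm lc bd by blast
qed



lemma proj_pt_bp:
  assumes "length M = d - 1" "d \<ge> 1"
  shows "proj_pt d (blaschke_pair M)"
proof -
  have "degree ([:0, 1:] * Pl M) = d"
    using assms degree_Pl[of M] Pl_nz[of M] by (simp add: degree_mult_eq)
  moreover have "degree (Ql M) \<le> d" using degree_Ql[of M] assms by simp
  moreover have "[:0, 1:] * Pl M \<noteq> 0" using Pl_nz[of M] by simp
  ultimately show ?thesis by (simp add: proj_pt_def blaschke_pair_def Pl_def[symmetric] Ql_def[symmetric])
qed

lemma part1:
  fixes as :: "nat \<Rightarrow> complex list"
  assumes d: "d \<ge> 1"
  and as: "\<forall>n. length (as n) = d - 1 \<and> (\<forall>a\<in>set (as n). norm a < 1)"
  shows "\<exists>r v. strict_mono r \<and> alg_conv d (\<lambda>n. blaschke_pair (as (r n))) v \<and>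
               (\<exists>\<theta>::real. \<exists>k. 1 \<le> k \<and> k \<le> d \<and>
                  in_Bminus k (smult (exp (\<i> * of_real \<theta>)) (fst (phi v)), snd (phi v)))"
proof -
  obtain r M where r: "strict_mono r" "lconv (as \<circ> r) M" and M: "\<forall>a\<in>set M. norm a \<le> 1"
    using extract_sub[of as "d - 1"] as by (metis less_imp_le)
  have lenM: "length M = d - 1" using r(2) as by (metis comp_apply lconv_def)
  have cf: "cconv (\<lambda>n. [:0, 1:] * Pl (as (r n))) ([:0, 1:] * Pl M)"
    using cconv_mult[OF cconv_const cconv_Pl[OF r(2)], of "[:0, 1:]"] by (simp add: o_def del: mult_pCons_left)
  have cs: "cconv (\<lambda>n. Ql (as (r n))) (Ql M)"
    using cconv_Ql[OF r(2)] by (simp add: o_def)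
  have ac: "alg_conv d (\<lambda>n. blaschke_pair (as (r n))) (blaschke_pair M)"
    unfolding alg_conv_def
  proof (intro conjI allI exI[where x="\<lambda>n. 1"] impI)
    show "proj_pt d (blaschke_pair (as (r n)))" for n using proj_pt_bp as d by blast
    show "proj_pt d (blaschke_pair M)" using proj_pt_bp lenM d by blast
    show "(1::complex) \<noteq> 0" by simp
    fix i
    show "(\<lambda>n. 1 * coeff (fst (blaschke_pair (as (r n)))) i) \<longlonglongrightarrow> coeff (fst (blaschke_pair M)) i"
      using cf unfolding cconv_def blaschke_pair_def Pl_def[symmetric] by simp
    show "(\<lambda>n. 1 * coeff (snd (blaschke_pair (as (r n)))) i) \<longlonglongrightarrow> coeff (snd (blaschke_pair M)) i"
      using cs unfolding cconv_def blaschke_pair_def Ql_def[symmetric] by simp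
  qed
  define I where "I = filter (\<lambda>a. norm a < 1) M"
  define Bd where "Bd = filter (\<lambda>a. \<not> norm a < 1) M"
  define g where "g = (\<Prod>b\<leftarrow>Bd. - cnj b)"
  have ph: "phi (blaschke_pair M) = ([:0, 1:] * Pl I, smult g (Ql I))"
    unfolding I_def Bd_def g_def by (rule phi_blaschke[OF M])
  have bd: "\<forall>b\<in>set Bd. norm b = 1" using M unfolding Bd_def by force
  have ng: "norm g = 1" unfolding g_def by (rule norm_prod_boundary[OF bd])
  then have g0: "g \<noteq> 0" by auto
  have eg: "exp (\<i> * of_real (Arg g)) = g" using Arg_eq[OF g0] ng by simp
  have lenI: "length I \<le> d - 1" unfolding I_def using lenM by (metis length_filter_le)
  have inB: "in_Bminus (length I + 1) (smult g ([:0, 1:] * Pl I), smult g (Ql I))"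
    unfolding in_Bminus_def
    by (rule exI[where x=I]) (auto simp: I_def blaschke_pair_def Pl_def Ql_def g0 intro!: exI[where x=g])
  show ?thesis
    using r(1) ac inB lenI d ph eg
    by (intro exI[where x=r] exI[where x="blaschke_pair M"] conjI exI[where x="Arg g"]
        exI[where x="length I + 1"]) auto
qed



lemma zorder_lin_factor:
  assumes hol: "g1 holomorphic_on S" and S: "open S" "connected S" "b \<in> S"
    and nz: "\<exists>w\<in>S. g1 w \<noteq> 0"
    and eq: "\<And>z. z \<in> S \<Longrightarrow> g z = (z - a) * g1 z"
  shows "zorder g b = zorder g1 b + (if b = a then 1 else 0)" and "zorder g1 b \<ge> 0"
proof -
  define n where "n = zorder g1 b"
  define h where "h = zor_poly g1 b"
  have ze: "(if g1 b = 0 then n > 0 else n = 0) \<and> (\<exists>r. r > 0 \<and> cball b r \<subseteq> S \<and> h holomorphic_on cball b r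
    \<and> (\<forall>w\<in>cball b r. g1 w = h w * (w - b) ^ nat n \<and> h w \<noteq> 0))"
    unfolding n_def h_def by (rule zorder_exist_zero[OF hol S nz])
  then have nn: "if g1 b = 0 then n > 0 else n = 0" by (rule conjunct1)
  obtain r where r: "r > 0" "cball b r \<subseteq> S" "h holomorphic_on cball b r"
     and hr: "\<forall>w\<in>cball b r. g1 w = h w * (w - b) ^ nat n \<and> h w \<noteq> 0"
    using ze by blast
  have n0: "n \<ge> 0" using nn by (auto split: if_splits)
  then show "zorder g1 b \<ge> 0" by (simp add: n_def)
  have hb: "h holomorphic_on ball b r" using r(3) by (rule holomorphic_on_subset) auto
  show "zorder g b = zorder g1 b + (if b = a then 1 else 0)"
  proof (cases "b = a")
    case True
    have "zorder g b = n + 1"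
    proof (rule zorder_eqI[where g=h and S="ball b r"])
      show "open (ball b r)" by simp
      show "b \<in> ball b r" using r by simp
      show "h holomorphic_on ball b r" by (rule hb)
      show "h b \<noteq> 0" using hr r by simp
      fix w assume w: "w \<in> ball b r" "w \<noteq> b"
      then have wS: "w \<in> S" using r(2) by auto
      have "g w = (w - b) * (h w * (w - b) ^ nat n)" using eq[OF wS] hr w True by simp
      also have "\<dots> = h w * (w - b) ^ (nat n + 1)" by (simp add: algebra_simps)
      also have "\<dots> = h w * (w - b) powi (n + 1)"
      proof -
        have "nat (n + 1) = nat n + 1" using n0 by simp
        then show ?thesis using n0 by (simp add: power_int_def)
      qed
      finally show "g w = h w * (w - b) powi (n + 1)" .
    qed
    then show ?thesis using True by (simp add: n_def)
  next
    case False
    define T where "T = ball b r - {a}"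
    have "zorder g b = n"
    proof (rule zorder_eqI[where g="\<lambda>w. (w - a) * h w" and S=T])
      show "open T" unfolding T_def by (simp add: open_Diff)
      show "b \<in> T" using r False by (simp add: T_def)
      show "(\<lambda>w. (w - a) * h w) holomorphic_on T"
        unfolding T_def by (intro holomorphic_intros holomorphic_on_subset[OF hb]) auto
      show "(b - a) * h b \<noteq> 0" using hr r False by simp
      fix w assume w: "w \<in> T" "w \<noteq> b"
      then have wS: "w \<in> S" using r(2) by (auto simp: T_def)
      have "g w = (w - a) * (h w * (w - b) ^ nat n)" using eq[OF wS] hr w by (simp add: T_def)
      also have "\<dots> = (w - a) * h w * (w - b) powi n" using n0 by (simp add: power_int_def)
      finally show "g w = (w - a) * h w * (w - b) powi n" .
    qed
    then show ?thesis using False by (simp add: n_def)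
  qed
qed

lemma zorder_pos_zero:
  assumes hol: "g holomorphic_on S" and S: "open S" "connected S" "b \<in> S"
    and nz: "\<exists>w\<in>S. g w \<noteq> 0"
  shows "(if g b = 0 then zorder g b > 0 else zorder g b = 0)"
  using zorder_exist_zero[OF hol S nz] by (rule conjunct1)

lemma zeros_factor:
  assumes "g holomorphic_on S" "open S" "connected S" "finite {z\<in>S. g z = 0}" "\<exists>w\<in>S. g w \<noteq> 0"
    "(\<Sum>z\<in>{z\<in>S. g z = 0}. zorder g z) = int N"
  shows "\<exists>L k. length L = N \<and> set L \<subseteq> S \<and> k holomorphic_on S \<and> (\<forall>z\<in>S. k z \<noteq> 0) \<and>
           (\<forall>z\<in>S. g z = (\<Prod>a\<leftarrow>L. z - a) * k z)"
  using assms
proof (induction N arbitrary: g)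
  case 0
  have pos: "\<forall>z\<in>{z\<in>S. g z = 0}. zorder g z > 0"
    using zorder_pos_zero[OF 0(1-3) _ 0(5)] by (metis (mono_tags, lifting) mem_Collect_eq)
  have "{z\<in>S. g z = 0} = {}"
  proof (rule ccontr)
    assume ne: "{z\<in>S. g z = 0} \<noteq> {}"
    have "(\<Sum>z\<in>{z\<in>S. g z = 0}. zorder g z) > 0"
      using sum_pos[OF 0(4) ne] pos by blast
    then show False using 0(6) by simp
  qed
  then have "\<forall>z\<in>S. g z \<noteq> 0" by auto
  then show ?case using 0(1) by (intro exI[where x="[]"] exI[where x=g]) auto
next
  case (Suc N)
  define Z where "Z = {z\<in>S. g z = 0}"
  have "Z \<noteq> {}"
  proof
    assume "Z = {}" then show False using Suc.prems(6) unfolding Z_def[symmetric] by simp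
  qed
  then obtain a where a: "a \<in> S" "g a = 0" unfolding Z_def by auto
  define g1 where "g1 = (\<lambda>z. if z = a then deriv g a else (g z - g a) / (z - a))"
  have hol1: "g1 holomorphic_on S" unfolding g1_def
    by (rule pole_lemma[OF Suc.prems(1)]) (simp add: interior_open[OF Suc.prems(2)] a)
  have eq: "g z = (z - a) * g1 z" if "z \<in> S" for z
    using a by (cases "z = a") (auto simp: g1_def)
  have nz1: "\<exists>w\<in>S. g1 w \<noteq> 0" using Suc.prems(5) eq by force
  define Z1 where "Z1 = {z\<in>S. g1 z = 0}"
  have Z1Z: "Z1 \<subseteq> Z" unfolding Z1_def Z_def using eq by auto
  have fin1: "finite Z1" using Z1Z Suc.prems(4) finite_subset unfolding Z_def by blast
  have zo: "zorder g z = zorder g1 z + (if z = a then 1 else 0)" if "z \<in> S" for z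
    using zorder_lin_factor(1)[OF hol1 Suc.prems(2,3) that nz1 eq] by blast
  have zo0: "zorder g1 z = 0" if "z \<in> S" "g1 z \<noteq> 0" for z
    using zorder_pos_zero[OF hol1 Suc.prems(2,3) that(1) nz1] that(2) by simp
  have aZ: "a \<in> Z" using a by (simp add: Z_def)
  have finZ: "finite Z" using Suc.prems(4) by (simp add: Z_def)
  have "(\<Sum>z\<in>Z. zorder g z) = (\<Sum>z\<in>Z. zorder g1 z + (if z = a then 1 else 0))"
    by (rule sum.cong) (auto simp: Z_def zo)
  also have "\<dots> = (\<Sum>z\<in>Z. zorder g1 z) + 1"
    using finZ aZ by (simp add: sum.distrib)
  also have "(\<Sum>z\<in>Z. zorder g1 z) = (\<Sum>z\<in>Z1. zorder g1 z)"
    by (rule sum.mono_neutral_right[OF finZ Z1Z]) (auto simp: Z_def Z1_def zo0)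
  finally have "(\<Sum>z\<in>Z1. zorder g1 z) = int N" using Suc.prems(6) by (simp add: Z_def)
  then obtain L k where Lk: "length L = N" "set L \<subseteq> S" "k holomorphic_on S" "\<forall>z\<in>S. k z \<noteq> 0"
      "\<forall>z\<in>S. g1 z = (\<Prod>a\<leftarrow>L. z - a) * k z"
    using Suc.IH[OF hol1 Suc.prems(2,3) fin1[unfolded Z1_def] nz1] unfolding Z1_def by blast
  show ?case
  proof (intro exI[where x="a # L"] exI[where x=k] conjI)
    show "\<forall>z\<in>S. g z = (\<Prod>a\<leftarrow>a # L. z - a) * k z" using Lk(5) eq by (simp add: mult.assoc)
  qed (use Lk a in auto)
qed



lemma mm_ball:
  assumes hol: "F holomorphic_on ball 0 1" and t: "0 < t" "t < 1" and z: "norm z < t"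
    and bd: "\<And>w. norm w = t \<Longrightarrow> norm (F w) \<le> M"
  shows "norm (F z) \<le> M"
proof -
  have sub: "cball 0 t \<subseteq> ball (0::complex) 1" using t by auto
  have "ball 0 t \<subseteq> ball (0::complex) 1" using t by auto
  then have hb: "F holomorphic_on ball 0 t" using holomorphic_on_subset[OF hol] by simp
  have ct: "continuous_on (cball 0 t) F"
    using holomorphic_on_imp_continuous_on[OF holomorphic_on_subset[OF hol sub]] .
  show ?thesis
    using maximum_modulus_frontier[of F "ball 0 t" M z] hb ct t bd z by auto
qed

lemma cont_prod_list:
  assumes "\<And>a. a \<in> set L \<Longrightarrow> continuous_on S (h a)"
  shows "continuous_on S (\<lambda>z. \<Prod>a\<leftarrow>L. (h a z :: complex))"
  using assms by (induction L) (auto intro!: continuous_intros)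

lemma hol_prod_list:
  assumes "\<And>a. a \<in> set L \<Longrightarrow> (h a) holomorphic_on S"
  shows "(\<lambda>z. \<Prod>a\<leftarrow>L. (h a z :: complex)) holomorphic_on S"
  using assms by (induction L) (auto intro!: holomorphic_intros)

lemma prod_list_div: "(\<Prod>a\<leftarrow>L. (x a / y a :: complex)) = (\<Prod>a\<leftarrow>L. x a) / (\<Prod>a\<leftarrow>L. y a)"
  by (induction L) auto

lemma norm_prod_list_1:
  assumes "\<And>a. a \<in> set L \<Longrightarrow> norm (h a :: complex) = 1"
  shows "norm (\<Prod>a\<leftarrow>L. h a) = 1"
  using assms by (induction L) (auto simp: norm_mult)

lemma prod_list_nz:
  assumes "\<And>a. a \<in> set L \<Longrightarrow> (h a :: complex) \<noteq> 0"
  shows "(\<Prod>a\<leftarrow>L. h a) \<noteq> 0"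
  using assms by (induction L) auto

lemma moebius_circle:
  assumes "norm (a::complex) < 1" "norm y = 1"
  shows "norm ((y - a) / (1 - cnj a * y)) = 1"
proof -
  have "y * cnj y = 1" using assms(2) complex_norm_square[of y] by simp
  then have "1 - cnj a * y = y * (cnj y - cnj a)" by (simp add: algebra_simps)
  then have "norm (1 - cnj a * y) = norm (y - a)"
    using assms(2) by (simp add: norm_mult complex_cnj_diff[symmetric] del: complex_cnj_diff)
  moreover have "y \<noteq> a" using assms by auto
  ultimately show ?thesis by (simp add: norm_divide)
qed

lemma B_near_circle:
  fixes B :: "complex \<Rightarrow> complex"
  assumes cont: "continuous_on (cball 0 1) B" and circ: "\<And>y. norm y = 1 \<Longrightarrow> norm (B y :: complex) = 1"
    and "\<delta> > 0"
  shows "\<exists>\<eta>>0. \<forall>w. 1 - \<eta> < norm w \<and> norm w < 1 \<longrightarrow> \<bar>norm (B w) - 1\<bar> < \<delta>"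
proof -
  have "uniformly_continuous_on (cball 0 1) B"
    by (rule compact_uniformly_continuous[OF cont compact_cball])
  then obtain e where e: "e > 0" "\<forall>x\<in>cball 0 1. \<forall>x'\<in>cball 0 1. dist x' x < e \<longrightarrow> dist (B x') (B x) < \<delta>"
    using assms(3) unfolding uniformly_continuous_on_def by metis
  show ?thesis
  proof (intro exI[where x="min e 1"] conjI allI impI)
    show "min e 1 > 0" using e by simp
    fix w :: complex assume w: "1 - min e 1 < norm w \<and> norm w < 1"
    then have w0: "w \<noteq> 0" by auto
    define y where "y = w / of_real (norm w)"
    have ny: "norm y = 1" using w0 by (simp add: y_def norm_divide)
    have "dist w y = norm (w - y)" by (simp add: dist_norm)
    also have "w - y = (1 - 1 / of_real (norm w)) * w" by (simp add: y_def algebra_simps)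
    also have "norm \<dots> = \<bar>1 - 1 / norm w\<bar> * norm w" by (simp add: norm_mult del: of_real_divide)
      (metis norm_of_real of_real_1 of_real_diff of_real_divide)
    also have "\<dots> = \<bar>norm w - 1\<bar>" using w0 by (simp add: abs_mult[symmetric] algebra_simps divide_simps)
    also have "\<dots> < e" using w by linarith
    finally have "dist w y < e" .
    then have "dist (B w) (B y) < \<delta>" using e(2) w ny by (auto simp: dist_norm)
    then have "\<bar>norm (B w) - norm (B y)\<bar> < \<delta>"
      using norm_triangle_ineq3[of "B w" "B y"] by (simp add: dist_norm)
    then show "\<bar>norm (B w) - 1\<bar> < \<delta>" using circ[OF ny] by simp
  qed
qed

lemma blaschke_rigid:
  fixes g k :: "complex \<Rightarrow> complex"
  assumes hol: "g holomorphic_on ball 0 1" and into: "\<And>z. z \<in> ball 0 1 \<Longrightarrow> norm (g z) < 1"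
    and prp: "\<And>\<rho>. \<rho> < 1 \<Longrightarrow> \<exists>s<1. \<forall>z. s < norm z \<and> norm z < 1 \<longrightarrow> \<rho> < norm (g z)"
    and L: "\<And>a. a \<in> set L \<Longrightarrow> norm a < 1"
    and k: "k holomorphic_on ball 0 1" "\<And>z. z \<in> ball 0 1 \<Longrightarrow> k z \<noteq> 0"
    and fac: "\<And>z. z \<in> ball 0 1 \<Longrightarrow> g z = (\<Prod>a\<leftarrow>L. z - a) * k z"
  shows "\<exists>c. norm c = 1 \<and> (\<forall>z\<in>ball 0 1. g z = c * (\<Prod>a\<leftarrow>L. (z - a) / (1 - cnj a * z)))"
proof -
  define B where "B = (\<lambda>z. \<Prod>a\<leftarrow>L. (z - a) / (1 - cnj a * z))"
  define D where "D = (\<lambda>z. \<Prod>a\<leftarrow>L. 1 - cnj a * z)"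
  define u where "u = (\<lambda>z. k z * D z)"
  have Dnz: "D z \<noteq> 0" if "norm z \<le> 1" for z
    unfolding D_def using norm_lt1_cnj_prod L that by (intro prod_list_nz) auto
  have holD: "D holomorphic_on ball 0 1" unfolding D_def by (intro hol_prod_list holomorphic_intros)
  have holu: "u holomorphic_on ball 0 1" unfolding u_def using k holD by (auto intro!: holomorphic_intros)
  have unz: "u z \<noteq> 0" if "z \<in> ball 0 1" for z using k(2) that Dnz by (simp add: u_def)
  have gBu: "g z = B z * u z" if "z \<in> ball 0 1" for z
  proof -
    have "B z = (\<Prod>a\<leftarrow>L. z - a) / D z" unfolding B_def D_def by (rule prod_list_div)
    then show ?thesis using fac[OF that] Dnz[of z] that by (simp add: u_def)
  qed
  have contB: "continuous_on (cball 0 1) B" unfolding B_def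
    by (intro cont_prod_list continuous_intros) (use norm_lt1_cnj_prod L in auto)
  have circ: "norm (B y) = 1" if "norm y = 1" for y
    unfolding B_def using moebius_circle L that by (intro norm_prod_list_1) auto
  have up: "norm (u z) \<le> 1" if z: "z \<in> ball 0 1" for z
  proof (rule ccontr)
    define x where "x = norm (u z)"
    assume "\<not> norm (u z) \<le> 1" then have x1: "x > 1" by (simp add: x_def)
    define \<delta> where "\<delta> = (1 - 1/x)/2"
    have \<delta>: "\<delta> > 0" "\<delta> < 1" using x1 by (auto simp: \<delta>_def field_simps)
    obtain \<eta> where \<eta>: "\<eta> > 0" "\<forall>w. 1 - \<eta> < norm w \<and> norm w < 1 \<longrightarrow> \<bar>norm (B w) - 1\<bar> < \<delta>"
      using B_near_circle[OF contB circ \<delta>(1)] by blast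
    define t where "t = (1 + max (norm z) (1 - \<eta>))/2"
    have nz: "norm z < 1" using z by simp
    have nz0: "0 \<le> norm z" by simp
    define m where "m = max (norm z) (1 - \<eta>)"
    have m: "norm z \<le> m" "1 - \<eta> \<le> m" "m < 1" using nz \<eta>(1) by (auto simp: m_def)
    have tm: "2 * t = 1 + m" by (simp add: t_def m_def)
    have t1: "0 < t" using m nz0 tm by linarith
    have t2: "t < 1" using m nz0 tm by linarith
    have t3: "norm z < t" using m nz0 tm by linarith
    have t4: "1 - \<eta> < t" using m nz0 tm by linarith
    note t = t1 t2 t3 t4
    have "norm (u z) \<le> 1/(1-\<delta>)"
    proof (rule mm_ball[OF holu t(1,2,3)])
      fix w :: complex assume w: "norm w = t"
      then have wb: "w \<in> ball 0 1" using t by simp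
      have Bw: "norm (B w) > 1 - \<delta>" using \<eta>(2) w t by force
      have "norm (g w) < 1" using into[OF wb] .
      then have lt: "norm (B w) * norm (u w) < 1" using gBu[OF wb] by (simp add: norm_mult)
      have "(1-\<delta>) * norm (u w) \<le> norm (B w) * norm (u w)"
        by (rule mult_right_mono) (use Bw in auto)
      then have "(1-\<delta>) * norm (u w) \<le> 1" using lt by linarith
      then show "norm (u w) \<le> 1/(1-\<delta>)" using \<delta> by (simp add: field_simps)
    qed
    moreover have "1/(1-\<delta>) < x" using x1 by (simp add: \<delta>_def field_simps)
    ultimately show False by (simp add: x_def)
  qed
  have low: "norm (u z) \<ge> 1" if z: "z \<in> ball 0 1" for z
  proof (rule ccontr)
    define x where "x = norm (u z)"
    assume "\<not> norm (u z) \<ge> 1" then have x1: "x < 1" by (simp add: x_def)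
    have x0: "x > 0" using unz[OF z] by (simp add: x_def)
    define e where "e = (1 - x)/4"
    have e: "e > 0" "e < 1/4" using x1 x0 by (auto simp: e_def)
    obtain s where s: "s < 1" "\<forall>w. s < norm w \<and> norm w < 1 \<longrightarrow> 1 - e < norm (g w)"
      using prp[of "1 - e"] e by auto
    obtain \<eta> where \<eta>: "\<eta> > 0" "\<forall>w. 1 - \<eta> < norm w \<and> norm w < 1 \<longrightarrow> \<bar>norm (B w) - 1\<bar> < e"
      using B_near_circle[OF contB circ e(1)] by blast
    define t where "t = (1 + max (norm z) (max s (1 - \<eta>)))/2"
    have nz: "norm z < 1" using z by simp
    have nz0: "0 \<le> norm z" by simp
    define m where "m = max (norm z) (max s (1 - \<eta>))"
    have m: "norm z \<le> m" "1 - \<eta> \<le> m" "s \<le> m" "m < 1" using nz \<eta>(1) s(1) by (auto simp: m_def)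
    have tm: "2 * t = 1 + m" by (simp add: t_def m_def)
    have t1: "0 < t" using m nz0 tm by linarith
    have t2: "t < 1" using m nz0 tm by linarith
    have t3: "norm z < t" using m nz0 tm by linarith
    have t4: "1 - \<eta> < t" using m nz0 tm by linarith
    have t5: "s < t" using m nz0 tm by linarith
    note t = t1 t2 t3 t4 t5
    have holi: "(\<lambda>w. inverse (u w)) holomorphic_on ball 0 1"
      using holu unz by (auto intro!: holomorphic_intros)
    have "norm (inverse (u z)) \<le> (1+e)/(1-e)"
    proof (rule mm_ball[OF holi t(1,2,3)])
      fix w :: complex assume w: "norm w = t"
      then have wb: "w \<in> ball 0 1" using t by simp
      have Bw: "norm (B w) < 1 + e" using \<eta>(2) w t by force
      have "1 - e < norm (g w)" using s(2) w t by force
      then have lt: "1 - e < norm (B w) * norm (u w)" using gBu[OF wb] by (simp add: norm_mult)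
      have "norm (B w) * norm (u w) \<le> (1 + e) * norm (u w)"
        by (rule mult_right_mono) (use Bw in auto)
      then have "1 - e < (1 + e) * norm (u w)" using lt by linarith
      moreover have y0: "norm (u w) > 0" using unz[OF wb] by simp
      moreover have e1: "1 - e > 0" using e by simp
      ultimately have "1 / norm (u w) \<le> (1+e)/(1-e)"
        by (simp add: divide_simps)
      then show "norm (inverse (u w)) \<le> (1+e)/(1-e)" by (simp add: norm_inverse divide_inverse)
    qed
    then have "1 / x \<le> (1+e)/(1-e)" by (simp add: x_def norm_inverse divide_inverse)
    then have "1 - e \<le> (1 + e) * x" using x0 e by (simp add: field_simps)
    moreover have "(1 + e) * x < 1 - e"
    proof -
      have "e * x < e" using e x1 by simp
      then have "(1 + e) * x < x + e" by (simp add: algebra_simps)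
      also have "x + e \<le> 1 - e" using x1 by (simp add: e_def field_simps)
      finally show ?thesis .
    qed
    ultimately show False by linarith
  qed
  have one: "norm (u z) = 1" if "z \<in> ball 0 1" for z using up[OF that] low[OF that] by linarith
  have "u constant_on ball 0 1"
    by (rule maximum_modulus_principle[OF holu open_ball connected_ball open_ball subset_refl, of 0])
       (auto simp: one)
  then obtain c where c: "\<And>z. z \<in> ball 0 1 \<Longrightarrow> u z = c" unfolding constant_on_def by blast
  have "norm c = 1" using one[of 0] c[of 0] by simp
  moreover have "\<forall>z\<in>ball 0 1. g z = c * B z" using gBu c by (simp add: mult.commute)
  ultimately show ?thesis unfolding B_def by blast
qed



lemma infinite_ball01: "infinite (ball (0::complex) 1)"
proof -
  have "(0::complex) islimpt ball 0 1" by (simp add: islimpt_ball)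
  then have "\<forall>e>0. infinite (ball 0 1 \<inter> ball (0::complex) e)" unfolding islimpt_eq_infinite_ball .
  then have "infinite (ball 0 1 \<inter> ball (0::complex) 1)" by (meson zero_less_one)
  then show ?thesis by simp
qed

lemma proper_escape:
  fixes f :: "complex \<Rightarrow> complex"
  assumes into: "f ` ball 0 1 \<subseteq> ball 0 1"
    and pr: "\<forall>C. compact C \<and> C \<subseteq> ball 0 1 \<longrightarrow> compact {z \<in> ball 0 1. f z \<in> C}"
    and r: "\<rho> < 1"
  shows "\<exists>s<1. \<forall>z. s < norm z \<and> norm z < 1 \<longrightarrow> \<rho> < norm (cnj (f z))"
proof (cases "\<rho> < 0")
  case True
  have "\<rho> < norm (cnj (f z))" for z using True norm_ge_zero[of "cnj (f z)"] by linarith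
  then show ?thesis by (intro exI[where x=0]) auto
next
  case False
  define K where "K = {z \<in> ball 0 1. f z \<in> cball 0 \<rho>}"
  have "cball 0 \<rho> \<subseteq> ball (0::complex) 1" using r by auto
  then have cK: "compact K" unfolding K_def using pr[rule_format, of "cball 0 \<rho>"] by simp
  show ?thesis
  proof (cases "K = {}")
    case True
    show ?thesis
    proof (intro exI[where x=0] conjI allI impI)
      fix z :: complex assume z: "0 < norm z \<and> norm z < 1"
      then have "z \<notin> K" using True by simp
      then show "\<rho> < norm (cnj (f z))" using z by (auto simp: K_def)
    qed simp
  next
    case ne: False
    have "compact (norm ` K)" by (rule compact_continuous_image[OF continuous_on_norm_id cK])
    moreover have "norm ` K \<noteq> {}" using ne by simp
    ultimately obtain s where s: "s \<in> norm ` K" "\<forall>t\<in>norm ` K. t \<le> s"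
      using compact_attains_sup[of "norm ` K"] by auto
    have s1: "s < 1" using s(1) by (auto simp: K_def)
    show ?thesis
    proof (intro exI[where x=s] conjI allI impI s1)
      fix z :: complex assume z: "s < norm z \<and> norm z < 1"
      have "z \<notin> K"
      proof
        assume "z \<in> K" then have "norm z \<le> s" using s(2) by simp
        then show False using z by simp
      qed
      then show "\<rho> < norm (cnj (f z))" using z by (auto simp: K_def)
    qed
  qed
qed

lemma cnj_blaschke:
  "cnj (\<Prod>a\<leftarrow>L0. (z - a) / (1 - cnj a * z)) =
   (\<Prod>a\<leftarrow>map cnj L0. (cnj z - a)) / (\<Prod>a\<leftarrow>map cnj L0. (1 - cnj a * cnj z))"
  by (induction L0) auto

lemma proper_rep:
  assumes P: "proper_antihol_deg d f"
  shows "\<exists>c L. norm c = 1 \<and> length L = d \<and> (\<forall>a\<in>set L. norm a < 1) \<and> anti_rat_rep d f (smult c (Pl L), Ql L)"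
proof -
  define g where "g = (\<lambda>z. cnj (f z))"
  have hol: "g holomorphic_on ball 0 1" and into: "f ` ball 0 1 \<subseteq> ball 0 1"
    and pr: "\<forall>C. compact C \<and> C \<subseteq> ball 0 1 \<longrightarrow> compact {z \<in> ball 0 1. f z \<in> C}"
    and cnt: "finite {z \<in> ball 0 1. f z = 0}"
       "(\<Sum>z\<in>{z \<in> ball 0 1. f z = 0}. zorder (\<lambda>x. cnj (f x) - cnj 0) z) = int d"
    using P unfolding proper_antihol_deg_def g_def by (auto simp del: complex_cnj_zero)
  have Zeq: "{z \<in> ball 0 1. f z = 0} = {z \<in> ball 0 1. g z = 0}" by (auto simp: g_def)
  have geq: "(\<lambda>x. cnj (f x) - cnj 0) = g" by (simp add: g_def)
  have fin: "finite {z \<in> ball 0 1. g z = 0}" using cnt(1) Zeq by simp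
  have sum: "(\<Sum>z\<in>{z \<in> ball 0 1. g z = 0}. zorder g z) = int d" using cnt(2) Zeq geq by simp
  have nz: "\<exists>w\<in>ball 0 1. g w \<noteq> 0"
  proof (rule ccontr)
    assume "\<not> ?thesis"
    then have "{z \<in> ball 0 1. g z = 0} = ball 0 1" by auto
    then show False using fin infinite_ball01 by simp
  qed
  obtain L0 k where Lk: "length L0 = d" "set L0 \<subseteq> ball 0 1" "k holomorphic_on ball 0 1"
      "\<forall>z\<in>ball 0 1. k z \<noteq> 0" "\<forall>z\<in>ball 0 1. g z = (\<Prod>a\<leftarrow>L0. z - a) * k z"
    using zeros_factor[OF hol open_ball connected_ball fin nz sum] by (elim exE conjE) (rule that)
  have intog: "norm (g z) < 1" if "z \<in> ball 0 1" for z using into that by (auto simp: g_def image_subset_iff)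
  have prp: "\<And>\<rho>. \<rho> < 1 \<Longrightarrow> \<exists>s<1. \<forall>z. s < norm z \<and> norm z < 1 \<longrightarrow> \<rho> < norm (g z)"
    unfolding g_def by (rule proper_escape[OF into pr])
  have L0: "\<And>a. a \<in> set L0 \<Longrightarrow> norm a < 1" using Lk(2) by auto
  have "\<exists>c. norm c = 1 \<and> (\<forall>z\<in>ball 0 1. g z = c * (\<Prod>a\<leftarrow>L0. (z - a) / (1 - cnj a * z)))"
  proof (rule blaschke_rigid[OF hol])
    show "norm (g z) < 1" if "z \<in> ball 0 1" for z using intog[OF that] .
    show "\<exists>s<1. \<forall>z. s < norm z \<and> norm z < 1 \<longrightarrow> \<rho> < norm (g z)" if "\<rho> < 1" for \<rho>
      using prp[OF that] .
    show "norm a < 1" if "a \<in> set L0" for a using L0[OF that] .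
    show "k holomorphic_on ball 0 1" by (rule Lk(3))
    show "k z \<noteq> 0" if "z \<in> ball 0 1" for z using Lk(4) that by blast
    show "g z = (\<Prod>a\<leftarrow>L0. z - a) * k z" if "z \<in> ball 0 1" for z using Lk(5) that by blast
  qed
  then obtain c0 where c0: "norm c0 = 1" "\<forall>z\<in>ball 0 1. g z = c0 * (\<Prod>a\<leftarrow>L0. (z - a) / (1 - cnj a * z))"
    by (elim exE conjE) (rule that)
  define L where "L = map cnj L0"
  define c where "c = cnj c0"
  have Lb: "\<forall>a\<in>set L. norm a < 1" using L0 by (auto simp: L_def)
  have c0nz: "c \<noteq> 0" using c0(1) by (auto simp: c_def)
  have rep: "anti_rat_rep d f (smult c (Pl L), Ql L)"
    unfolding anti_rat_rep_def fst_conv snd_conv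
  proof (intro conjI ballI)
    show "coprime (smult c (Pl L)) (Ql L)"
    proof (rule coprime_no_common_root)
      show "smult c (Pl L) \<noteq> 0" using c0nz Pl_nz by simp
      fix x assume "poly (smult c (Pl L)) x = 0"
      then have "(\<Prod>a\<leftarrow>L. x - a) = 0" using c0nz by (simp add: poly_Pl)
      then have "0 \<in> set (map (\<lambda>a. x - a) L)" by (simp only: prod_list_zero_iff)
      then have "x \<in> set L" by auto
      then have "norm x \<le> 1" using Lb by auto
      then show "poly (Ql L) x \<noteq> 0" by (rule poly_Ql_nz[OF Lb])
    qed
    show "max (degree (smult c (Pl L))) (degree (Ql L)) = d"
      using degree_Pl[of L] degree_Ql[of L] Lk(1) c0nz by (simp add: L_def)
    fix z :: complex assume z: "z \<in> ball 0 1"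
    show "poly (Ql L) (cnj z) \<noteq> 0" using z Lb by (intro poly_Ql_nz) auto
    have "f z = cnj (g z)" by (simp add: g_def)
    also have "\<dots> = c * ((\<Prod>a\<leftarrow>L. (cnj z - a)) / (\<Prod>a\<leftarrow>L. (1 - cnj a * cnj z)))"
      using c0(2) z by (simp add: c_def L_def cnj_blaschke)
    also have "\<dots> = poly (smult c (Pl L)) (cnj z) / poly (Ql L) (cnj z)"
      by (simp add: poly_Pl poly_Ql)
    finally show "f z = poly (smult c (Pl L)) (cnj z) / poly (Ql L) (cnj z)" .
  qed
  have "norm c = 1" "length L = d" using c0(1) Lk(1) by (simp_all add: c_def L_def)
  then show ?thesis using rep Lb by blast
qed



lemma phi_deg_pos:
  fixes p q :: "complex poly"
  assumes p0: "p \<noteq> 0" and px: "poly p x = 0" and qx: "poly q x \<noteq> 0"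
  shows "map_degree (p, q) \<ge> 1"
proof (rule ccontr)
  assume "\<not> ?thesis"
  then have d0: "degree (p div gcd p q) = 0" by (simp add: map_degree_def phi_def)
  define G where "G = gcd p q"
  define h where "h = p div G"
  have ph: "p = h * G" unfolding h_def G_def by (simp add: dvd_div_mult_self)
  have h: "h = [:coeff h 0:]" using d0 degree_0_id[of h] by (simp add: h_def G_def)
  have "coeff h 0 \<noteq> 0"
  proof
    assume "coeff h 0 = 0" then have "h = 0" using h by simp
    then show False using p0 ph by simp
  qed
  then have "poly G x = 0" using px ph h by (metis mult_eq_0_iff poly_mult poly_pCons mult_zero_left add.right_neutral poly_0)
  moreover have "q = (q div G) * G" unfolding G_def by (simp add: dvd_div_mult_self)
  ultimately have "poly q x = 0" by (metis mult_zero_right poly_mult)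
  then show False using qx by simp
qed

lemma poly_Ql_0: "poly (Ql L) 0 = 1"
  by (induction L) (auto simp: Ql_Cons)

lemma hyp_bound:
  fixes w :: complex and K :: real
  assumes w: "norm w < 1" and h: "hyp_dist 0 w \<le> K"
  shows "norm w \<le> (exp K - 1) / (exp K + 1)"
proof -
  define x where "x = norm w"
  have x: "0 \<le> x" "x < 1" using w by (auto simp: x_def)
  have "ln ((1 + x) / (1 - x)) \<le> K" using h by (simp add: hyp_dist_def x_def Let_def)
  moreover have pos: "(1 + x) / (1 - x) > 0" using x by simp
  ultimately have "(1 + x) / (1 - x) \<le> exp K" by (metis exp_le_cancel_iff exp_ln)
  then have "1 + x \<le> exp K * (1 - x)" using x by (simp add: divide_simps)
  then have "x * (exp K + 1) \<le> exp K - 1" by (simp add: algebra_simps)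
  moreover have "exp K + 1 > 0" by (simp add: add_pos_pos)
  ultimately show ?thesis unfolding x_def[symmetric] by (simp add: divide_simps)
qed

lemma proj_pt_pq:
  assumes "length L = d" "c \<noteq> 0"
  shows "proj_pt d (smult c (Pl L), Ql L)"
  using assms degree_Pl[of L] degree_Ql[of L] Pl_nz[of L] by (simp add: proj_pt_def)

lemma part2:
  fixes f :: "nat \<Rightarrow> complex \<Rightarrow> complex" and K :: real
  assumes d: "d \<ge> 1" and hf: "\<forall>n. proper_antihol_deg d (f n) \<and> hyp_dist 0 (f n 0) \<le> K"
  shows "\<exists>pq. (\<forall>n. anti_rat_rep d (f n) (pq n)) \<and>
               (\<exists>r v. strict_mono r \<and> alg_conv d (\<lambda>n. pq (r n)) v \<and> map_degree v \<ge> 1)"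
proof -
  have "\<forall>n. \<exists>cL. norm (fst cL) = 1 \<and> length (snd cL) = d \<and> (\<forall>a\<in>set (snd cL). norm a < 1) \<and>
          anti_rat_rep d (f n) (smult (fst cL) (Pl (snd cL)), Ql (snd cL))"
  proof
    fix n
    have "proper_antihol_deg d (f n)" using hf by simp
    from proper_rep[OF this]
    obtain c L where "norm c = 1 \<and> length L = d \<and> (\<forall>a\<in>set L. norm a < 1) \<and> anti_rat_rep d (f n) (smult c (Pl L), Ql L)"
      by (elim exE) (rule that)
    then show "\<exists>cL. norm (fst cL) = 1 \<and> length (snd cL) = d \<and> (\<forall>a\<in>set (snd cL). norm a < 1) \<and>
          anti_rat_rep d (f n) (smult (fst cL) (Pl (snd cL)), Ql (snd cL))"
      by (intro exI[where x="(c, L)"]) simp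
  qed
  from choice[OF this] obtain CL where CL: "\<forall>n. norm (fst (CL n)) = 1 \<and> length (snd (CL n)) = d \<and> (\<forall>a\<in>set (snd (CL n)). norm a < 1) \<and>
          anti_rat_rep d (f n) (smult (fst (CL n)) (Pl (snd (CL n))), Ql (snd (CL n)))"
    by (elim exE) (rule that)
  define c where "c n = fst (CL n)" for n
  define L where "L n = snd (CL n)" for n
  define pq where "pq n = (smult (c n) (Pl (L n)), Ql (L n))" for n
  have cn: "norm (c n) = 1" for n using CL[rule_format, of n] unfolding c_def by (elim conjE)
  have Ln: "length (L n) = d" for n using CL[rule_format, of n] unfolding L_def by (elim conjE)
  have Lb: "\<forall>a\<in>set (L n). norm a < 1" for n using CL[rule_format, of n] unfolding L_def by (elim conjE)
  have rep: "anti_rat_rep d (f n) (pq n)" for n using CL[rule_format, of n] unfolding pq_def c_def L_def by (elim conjE)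
  define S where "S n = c n # L n" for n
  obtain r M where r: "strict_mono r" "lconv (S \<circ> r) M" and Mb: "\<forall>a\<in>set M. norm a \<le> 1"
  proof -
    have "\<exists>r M. strict_mono r \<and> lconv (S \<circ> r) M \<and> (\<forall>a\<in>set M. norm a \<le> 1)"
    proof (rule extract_sub)
      show "length (S n) = Suc d" for n by (simp add: S_def Ln)
      show "\<forall>a\<in>set (S n). norm a \<le> 1" for n using cn[of n] Lb[of n] by (auto simp: S_def)
    qed
    then show ?thesis using that by blast
  qed
  have lenM: "length M = Suc d" using r(2) by (simp add: lconv_def S_def Ln)
  then obtain c0 M' where M: "M = c0 # M'" by (cases M) auto
  have lc: "lconv (S \<circ> r) (c0 # M')" using r(2) M by simp
  have cc: "(\<lambda>n. c (r n)) \<longlonglongrightarrow> c0" using lconv_Cons(1)[OF lc] by (simp add: S_def)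
  have lM: "lconv (\<lambda>n. L (r n)) M'" using lconv_Cons(2)[OF lc] by (simp add: S_def)
  have lenM': "length M' = d" using lenM M by simp
  have M'b: "\<forall>a\<in>set M'. norm a \<le> 1" using Mb M by simp
  have "(\<lambda>n. norm (c (r n))) \<longlonglongrightarrow> norm c0" by (rule tendsto_norm[OF cc])
  then have nc0: "norm c0 = 1" using cn by (simp add: LIMSEQ_const_iff)
  then have c00: "c0 \<noteq> 0" by auto
  define v where "v = (smult c0 (Pl M'), Ql M')"
  have cf: "cconv (\<lambda>n. smult (c (r n)) (Pl (L (r n)))) (smult c0 (Pl M'))"
    by (rule cconv_smult[OF cc cconv_Pl[OF lM]])
  have cs: "cconv (\<lambda>n. Ql (L (r n))) (Ql M')" by (rule cconv_Ql[OF lM])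
  have ac: "alg_conv d (\<lambda>n. pq (r n)) v"
    unfolding alg_conv_def
  proof (intro conjI allI exI[where x="\<lambda>n. 1"] impI)
    show "proj_pt d (pq (r n))" for n unfolding pq_def using Ln cn
    proof (intro proj_pt_pq)
      show "c (r n) \<noteq> 0" using cn[of "r n"] by auto
    qed (use Ln in auto)
    show "proj_pt d v" unfolding v_def using lenM' c00 by (rule proj_pt_pq)
    show "(1::complex) \<noteq> 0" by simp
    fix i
    show "(\<lambda>n. 1 * coeff (fst (pq (r n))) i) \<longlonglongrightarrow> coeff (fst v) i"
      using cf unfolding cconv_def pq_def v_def by simp
    show "(\<lambda>n. 1 * coeff (snd (pq (r n))) i) \<longlonglongrightarrow> coeff (snd v) i"
      using cs unfolding cconv_def pq_def v_def by simp
  qed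
  define \<rho> where "\<rho> = (exp K - 1) / (exp K + 1)"
  have \<rho>1: "\<rho> < 1" unfolding \<rho>_def by (simp add: divide_simps add_pos_pos)
  have f0: "coeff (fst (pq n)) 0 = f n 0" for n
  proof -
    have "f n 0 = poly (fst (pq n)) 0 / poly (snd (pq n)) 0"
      using rep[of n] unfolding anti_rat_rep_def by simp
    moreover have "poly (snd (pq n)) 0 = 1" by (simp add: pq_def poly_Ql_0 del: poly_0_coeff_0)
    ultimately have "f n 0 = poly (fst (pq n)) 0" by simp
    then show ?thesis by (simp add: poly_0_coeff_0)
  qed
  have fb: "norm (f n 0) \<le> \<rho>" for n
  proof -
    have "f n ` ball 0 1 \<subseteq> ball 0 1" using hf unfolding proper_antihol_deg_def by blast
    then have "f n 0 \<in> ball 0 1" by (rule subsetD) simp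
    then have "norm (f n 0) < 1" by simp
    moreover have "hyp_dist 0 (f n 0) \<le> K" using hf by simp
    ultimately show ?thesis unfolding \<rho>_def by (rule hyp_bound)
  qed
  have "(\<lambda>n. coeff (fst (pq (r n))) 0) \<longlonglongrightarrow> coeff (fst v) 0"
    using cf unfolding cconv_def pq_def v_def by simp
  then have "(\<lambda>n. norm (f (r n) 0)) \<longlonglongrightarrow> norm (coeff (fst v) 0)"
    using f0 by (simp add: tendsto_norm)
  then have cv: "norm (coeff (fst v) 0) \<le> \<rho>" using fb by (intro Lim_bounded[where M=0]) auto
  have "\<exists>a0\<in>set M'. norm a0 < 1"
  proof (rule ccontr)
    assume "\<not> ?thesis"
    then have all1: "\<forall>a\<in>set M'. norm a = 1" using M'b by force
    have e1: "coeff (fst v) 0 = poly (fst v) 0" by (simp add: poly_0_coeff_0)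
    have "poly (fst v) 0 = c0 * (\<Prod>a\<leftarrow>M'. 0 - a)" by (simp add: v_def poly_Pl)
    then have "coeff (fst v) 0 = c0 * (\<Prod>a\<leftarrow>M'. 0 - a)" using e1 by simp
    then have "norm (coeff (fst v) 0) = 1" using nc0 all1 by (simp add: norm_mult norm_prod_list_1)
    then show False using cv \<rho>1 by simp
  qed
  then obtain a0 where a0: "a0 \<in> set M'" "norm a0 < 1" by blast
  have md: "map_degree v \<ge> 1" unfolding v_def
  proof (rule phi_deg_pos)
    show "smult c0 (Pl M') \<noteq> 0" using c00 Pl_nz by simp
    show "poly (smult c0 (Pl M')) a0 = 0" using a0(1) by (simp add: poly_Pl prod_list_zero_iff)
    show "poly (Ql M') a0 \<noteq> 0" unfolding poly_Ql
    proof (rule prod_list_nz)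
      fix a assume "a \<in> set M'"
      then have "norm a \<le> 1" using M'b by blast
      then have "norm a * norm a0 \<le> 1 * norm a0" by (intro mult_right_mono) auto
      then have "norm (cnj a * a0) < 1" using a0(2) by (simp add: norm_mult)
      then show "1 - cnj a * a0 \<noteq> 0" by auto
    qed
  qed
  show ?thesis using rep r(1) ac md by (intro exI[where x=pq] conjI allI exI[where x=r] exI[where x=v])
qed


theorem lemma2p6:
  fixes d :: nat
  assumes "d \<ge> 1"
  shows "(\<forall>as :: nat \<Rightarrow> complex list.
            (\<forall>n. length (as n) = d - 1 \<and> (\<forall>a\<in>set (as n). norm a < 1)) \<longrightarrow>
            (\<exists>r v. strict_mono r \<and> alg_conv d (\<lambda>n. blaschke_pair (as (r n))) v \<and>
               (\<exists>\<theta>::real. \<exists>k. 1 \<le> k \<and> k \<le> d \<and>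
                  in_Bminus k (smult (exp (\<i> * of_real \<theta>)) (fst (phi v)), snd (phi v)))))
       \<and> (\<forall>K::real. \<forall>f :: nat \<Rightarrow> complex \<Rightarrow> complex. K \<ge> 0 \<longrightarrow>
            (\<forall>n. proper_antihol_deg d (f n) \<and> hyp_dist 0 (f n 0) \<le> K) \<longrightarrow>
            (\<exists>pq. (\<forall>n. anti_rat_rep d (f n) (pq n)) \<and>
               (\<exists>r v. strict_mono r \<and> alg_conv d (\<lambda>n. pq (r n)) v \<and> map_degree v \<ge> 1)))"
  using part1[OF assms] part2[OF assms] by blast

end
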